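(* Let $G=(V,E)$ be a finite connected undirected graph with diameter $D$, and let $T\ge 4$ be an integer. Consider any execution of Algorithm FS (described in the context) on $G$ under arbitrary adversarial activations, with rounds numbered so that round $0$ is the first round at whose beginning some node is active. Let $$R = 4D + \Bigl\lfloor \frac{D}{\lfloor T/4\rfloor}\Bigr\rfloor\cdot (T \bmod 4).$$ Then for every round $t\ge R$ all nodes are active and $\delta_t(v)=\delta_t(w)$ for all $v,w\in V$. Moreover, there is a round $t_1$ such that for every $t\ge t_1$, each node $v$ beeps in round $t$ if and only if $\delta_t(v)=0$. In particular $R\le 7D$, so synchronization is reached in $O(D)$ rounds. Each node stores only $\delta(v)$ ($\lceil \log_2 T\rceil$ bits) and $\mathit{State}(v)$, $\mathit{Induced}(v)$ (3 bits in total).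
   Context: Model (beeping model with arbitrary activations). $G=(V,E)$ is a finite connected undirected graph with $n$ nodes and diameter $D$; $N(v)$ is the set of neighbors of $v$. Time proceeds in synchronous rounds. An integer $T\ge 4$ is known to all nodes. In each round, each active node either beeps or listens; a listening node learns only whether at least one of its neighbors beeped in that round (not how many, nor which). Checkpoints: $\mathit{CP}=\{c\in\mathbb{N}_0 : c\equiv 0 \pmod 4 \text{ and } T-c>3\}$, i.e. $\mathit{CP}=\{0,4,\dots,4(\lfloor T/4\rfloor-1)\}$. Algorithm FS. Each node $v$ stores $\delta(v)\in\{0,\dots,T-1\}$, $\mathit{State}(v)\in\{\mathit{Inactive},\mathit{Beep},\mathit{Listen}\}$ and $\mathit{Induced}(v)\in\{\mathit{true},\mathit{false}\}$. Initially all nodes are Inactive (other variables arbitrary). An inactive node does nothing except notice beeps. A node $v$ is \emph{activated in round $t$} if either the adversary chooses to activate it in round $t$, or $v$ is inactive and some neighbor beeps in round $t-1$; in both cases at the beginning of round $t$ it has $\delta(v)=1$, $\mathit{State}(v)=\mathit{Beep}$, $\mathit{Induced}(v)=\mathit{true}$. The adversary may activate any inactive nodes in any rounds. In each round $t$, each active node $v$ acts according to its state at the beginning of the round: (1) If $\mathit{State}(v)=\mathit{Beep}$: $v$ beeps; $\delta(v)\gets\delta(v)+1 \bmod T$; $\mathit{State}(v)\gets\mathit{Listen}$. (2) If $\mathit{State}(v)=\mathit{Listen}$ and at least one neighbor beeps in round $t$: if $\delta(v)\equiv c-1 \pmod T$ for some $c\in\mathit{CP}$, then $\delta(v)\gets\delta(v)+2\bmod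 T$, $\mathit{State}(v)\gets\mathit{Beep}$, $\mathit{Induced}(v)\gets\mathit{true}$ (we say $v$ \emph{gets induced} in round $t$, and each beeping neighbor $w$ \emph{induces} $v$ in round $t$); otherwise $\delta(v)\gets\delta(v)+1\bmod T$. (3) If $\mathit{State}(v)=\mathit{Listen}$ and no neighbor beeps in round $t$: $\delta(v)\gets\delta(v)+1\bmod T$; then, if ($\mathit{Induced}(v)=\mathit{true}$ and the new $\delta(v)\in\mathit{CP}$) or the new $\delta(v)=0$, set $\mathit{State}(v)\gets\mathit{Beep}$ and $\mathit{Induced}(v)\gets\mathit{false}$. Notation: $\delta_t(v)$, $\mathit{State}_t(v)$, $\mathit{Induced}_t(v)$ denote values at the beginning of round $t$. Rounds are numbered so that round $0$ is the first round at whose beginning some node is active. *)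

theory Defs
  imports Main
begin

definition undirected_graph :: "('v \<Rightarrow> 'v \<Rightarrow> bool) \<Rightarrow> bool" where
  "undirected_graph E \<longleftrightarrow> (\<forall>u v. E u v \<longrightarrow> E v u) \<and> (\<forall>v. \<not> E v v)"

definition connected_graph :: "('v \<Rightarrow> 'v \<Rightarrow> bool) \<Rightarrow> bool" where
  "connected_graph E \<longleftrightarrow> (\<forall>u v. E\<^sup>*\<^sup>* u v)"

definition gdist :: "('v \<Rightarrow> 'v \<Rightarrow> bool) \<Rightarrow> 'v \<Rightarrow> 'v \<Rightarrow> nat" where
  "gdist E u v = (LEAST k. (E ^^ k) u v)"

definition diameter :: "('v::finite \<Rightarrow> 'v \<Rightarrow> bool) \<Rightarrow> nat" where
  "diameter E = Max {gdist E u v | u v. True}"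

text \<open>Node states. An inactive node is represented by None; an active node by
  Some (delta, State, Induced).\<close>
datatype bstate = Beep | Listen

type_synonym nstate = "nat \<times> bstate \<times> bool"

definition CP :: "nat \<Rightarrow> nat set" where
  "CP T = {c. c mod 4 = 0 \<and> c + 3 < T}"

definition fs_init :: nstate where
  "fs_init = (1, Beep, True)"

text \<open>One round of Algorithm FS for an active node; h = some neighbour beeped in
  this round. The condition delta = c - 1 (mod T) is written (delta+1) mod T = c
  (c < T since c \<in> CP T).\<close>
fun fs_step :: "nat \<Rightarrow> nstate \<Rightarrow> bool \<Rightarrow> nstate" where
  "fs_step T (d, Beep, ind) h = ((d + 1) mod T, Listen, ind)"
| "fs_step T (d, Listen, ind) h =
     (if h then
        (if (\<exists>c\<in>CP T. (d + 1) mod T = c)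
         then ((d + 2) mod T, Beep, True)
         else ((d + 1) mod T, Listen, ind))
      else
        (let d' = (d + 1) mod T in
         if (ind \<and> d' \<in> CP T) \<or> d' = 0 then (d', Beep, False)
         else (d', Listen, ind)))"

text \<open>cfg t v = state of v at the beginning of round t.\<close>
definition beeps :: "(nat \<Rightarrow> 'v \<Rightarrow> nstate option) \<Rightarrow> nat \<Rightarrow> 'v \<Rightarrow> bool" where
  "beeps cfg t v \<longleftrightarrow> (\<exists>d ind. cfg t v = Some (d, Beep, ind))"

definition hears :: "('v \<Rightarrow> 'v \<Rightarrow> bool) \<Rightarrow> (nat \<Rightarrow> 'v \<Rightarrow> nstate option) \<Rightarrow> nat \<Rightarrow> 'v \<Rightarrow> bool" where
  "hears E cfg t v \<longleftrightarrow> (\<exists>w. E v w \<and> beeps cfg t w)"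

definition delta :: "(nat \<Rightarrow> 'v \<Rightarrow> nstate option) \<Rightarrow> nat \<Rightarrow> 'v \<Rightarrow> nat" where
  "delta cfg t v = fst (the (cfg t v))"

definition fs_execution ::
  "nat \<Rightarrow> ('v \<Rightarrow> 'v \<Rightarrow> bool) \<Rightarrow> (nat \<Rightarrow> 'v \<Rightarrow> nstate option) \<Rightarrow> bool" where
  "fs_execution T E cfg \<longleftrightarrow>
     (\<exists>v. cfg 0 v \<noteq> None) \<and>
     (\<forall>v. cfg 0 v = None \<or> cfg 0 v = Some fs_init) \<and>
     (\<forall>t v. case cfg t v of
         Some x \<Rightarrow> cfg (Suc t) v = Some (fs_step T x (hears E cfg t v))
       | None \<Rightarrow> (cfg (Suc t) v = None \<or> cfg (Suc t) v = Some fs_init) \<and>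
                 (hears E cfg t v \<longrightarrow> cfg (Suc t) v = Some fs_init))"

end

theory Submission
  imports Defs
begin



definition BD :: "nat \<Rightarrow> nat \<Rightarrow> bool" where
  "BD T d \<longleftrightarrow> d \<in> CP T \<or> (\<exists>c\<in>CP T. d = c + 1)"

definition indc :: "nat \<Rightarrow> ('v \<Rightarrow> 'v \<Rightarrow> bool) \<Rightarrow> (nat \<Rightarrow> 'v \<Rightarrow> nstate option) \<Rightarrow> nat \<Rightarrow> 'v \<Rightarrow> bool" where
  "indc T E cfg t v \<longleftrightarrow> (\<exists>d ind. cfg t v = Some (d, Listen, ind) \<and> hears E cfg t v \<and> (d+1) mod T \<in> CP T)"

primrec ph :: "nat \<Rightarrow> ('v \<Rightarrow> 'v \<Rightarrow> bool) \<Rightarrow> (nat \<Rightarrow> 'v \<Rightarrow> nstate option) \<Rightarrow> nat \<Rightarrow> 'v \<Rightarrow> nat" where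
  "ph T E cfg 0 v = 1"
| "ph T E cfg (Suc t) v = (case cfg t v of None \<Rightarrow> 1
     | Some x \<Rightarrow> ph T E cfg t v + (if indc T E cfg t v then 2 else 1))"

lemma CP_iff: "c \<in> CP T \<longleftrightarrow> c mod 4 = 0 \<and> c + 3 < T" by (simp add: CP_def)

lemma CP0: "4 \<le> T \<Longrightarrow> 0 \<in> CP T" by (simp add: CP_def)

lemma F3: assumes "BD T d" "e \<le> 1" shows "(d + e + 1) mod T \<notin> CP T"
proof -
  obtain c where c0: "c \<in> CP T" "d = c \<or> d = c + 1"
    using assms(1) unfolding BD_def by blast
  then have c: "c mod 4 = 0" "c + 3 < T" "d = c \<or> d = c + 1" unfolding CP_iff by auto
  have "(d + e + 1) mod T = d + e + 1" using c assms(2) by auto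
  moreover have "(d + e + 1) mod 4 \<noteq> 0" using c assms(2) by presburger
  ultimately show ?thesis by (simp add: CP_iff)
qed

lemma F4: "(d + 1) mod T \<in> CP T \<Longrightarrow> \<not> BD T d"
  using F3[of T d 0] by auto

lemma F5: "4 \<le> T \<Longrightarrow> BD T d \<Longrightarrow> (d + 1) mod T \<noteq> 0"
proof
  assume "4 \<le> T" "BD T d" "(d + 1) mod T = 0"
  then show False using F3[of T d 0] CP0[of T] by simp
qed

lemma F6: "c \<in> CP T \<Longrightarrow> c' \<in> CP T \<Longrightarrow> c \<noteq> c' + 1"
  unfolding CP_iff by presburger

lemma BD_lt: "BD T d \<Longrightarrow> d < T"
  unfolding BD_def by (auto simp: CP_iff)

lemma step_eq: "(\<exists>c\<in>CP T. (d+1) mod T = c) \<longleftrightarrow> (d+1) mod T \<in> CP T" by auto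

lemma modpred: fixes a T c :: nat assumes "(a + 1) mod T = c + 1" "c + 1 < T" shows "a mod T = c"
proof -
  have "T > 0" using assms by auto
  show ?thesis using assms mod_Suc[of a T] by (auto split: if_splits)
qed




locale fsx =
  fixes E :: "'v \<Rightarrow> 'v \<Rightarrow> bool" and T :: nat and cfg :: "nat \<Rightarrow> 'v \<Rightarrow> nstate option"
  assumes und: "undirected_graph E" and T4: "4 \<le> T" and ex: "fs_execution T E cfg"
begin

abbreviation pp where "pp \<equiv> ph T E cfg"
abbreviation ic where "ic \<equiv> indc T E cfg"

lemma Tpos: "0 < T" using T4 by simp

lemma symE: "E u v \<Longrightarrow> E v u" using und unfolding undirected_graph_def by blast

lemma ex_all: "case cfg t v of
         Some x \<Rightarrow> cfg (Suc t) v = Some (fs_step T x (hears E cfg t v))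
       | None \<Rightarrow> (cfg (Suc t) v = None \<or> cfg (Suc t) v = Some fs_init) \<and>
                 (hears E cfg t v \<longrightarrow> cfg (Suc t) v = Some fs_init)"
  using ex unfolding fs_execution_def by blast

lemma ex_some: "cfg t v = Some x \<Longrightarrow> cfg (Suc t) v = Some (fs_step T x (hears E cfg t v))"
  using ex_all[of t v] by simp

lemma ex_none: "cfg t v = None \<Longrightarrow> cfg (Suc t) v = None \<or> cfg (Suc t) v = Some fs_init"
  using ex_all[of t v] by simp

lemma ex_none_h: "cfg t v = None \<Longrightarrow> hears E cfg t v \<Longrightarrow> cfg (Suc t) v = Some fs_init"
  using ex_all[of t v] by simp

lemma ex0: "cfg 0 v = None \<or> cfg 0 v = Some fs_init"
  using ex unfolding fs_execution_def by blast

lemma act_Suc: "cfg t v \<noteq> None \<Longrightarrow> cfg (Suc t) v \<noteq> None"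
  using ex_some by fastforce

lemma act_mono: assumes "cfg t v \<noteq> None" "t \<le> t'" shows "cfg t' v \<noteq> None"
  using assms(2)
proof (induction t' rule: dec_induct)
  case base show ?case using assms(1) .
next
  case (step n) then show ?case using act_Suc by blast
qed

lemma fresh: "cfg (Suc t) v \<noteq> None \<Longrightarrow> cfg t v = None \<Longrightarrow> cfg (Suc t) v = Some fs_init"
  using ex_none[of t v] by auto

lemma init_beeps: "cfg t u = Some fs_init \<Longrightarrow> beeps cfg t u"
  unfolding beeps_def fs_init_def by blast

lemma hears_init: "cfg t u = Some fs_init \<Longrightarrow> E u x \<Longrightarrow> hears E cfg t x"
  unfolding hears_def using init_beeps symE by metis

lemma act_of_hears: "hears E cfg t x \<Longrightarrow> cfg (Suc t) x \<noteq> None"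
proof (cases "cfg t x")
  case None
  assume "hears E cfg t x" then show ?thesis using ex_none_h[OF None] by simp
next
  case (Some a) then show ?thesis using act_Suc[of t x] by auto
qed

lemma nbr_act: "cfg t u \<noteq> None \<Longrightarrow> E u x \<Longrightarrow> cfg (Suc t) x \<noteq> None"
proof (induction t)
  case 0
  then have "cfg 0 u = Some fs_init" using ex0[of u] by (cases "cfg 0 u") auto
  then show ?case using hears_init 0(2) act_of_hears by metis
next
  case (Suc t)
  show ?case
  proof (cases "cfg t u = None")
    case True
    then have "cfg (Suc t) u = Some fs_init" using fresh Suc.prems by simp
    then show ?thesis using hears_init Suc.prems(2) act_of_hears by metis
  next
    case False
    then have "cfg (Suc t) x \<noteq> None" using Suc.IH Suc.prems(2) by simp
    then show ?thesis using act_Suc by simp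
  qed
qed

lemma ph_none: "cfg t v = None \<Longrightarrow> pp (Suc t) v = 1" by simp
lemma ph_some: "cfg t v = Some y \<Longrightarrow> pp (Suc t) v = pp t v + (if ic t v then 2 else 1)" by simp

lemma fresh_state: assumes "cfg t u \<noteq> None" "t = 0 \<or> cfg (t - 1) u = None"
  shows "cfg t u = Some fs_init \<and> pp t u = 1"
proof (cases t)
  case 0 then show ?thesis using ex0[of u] assms by auto
next
  case (Suc s) then show ?thesis using fresh assms by auto
qed

definition NI where "NI t \<longleftrightarrow> (\<forall>v d s i. cfg t v = Some (d,s,i) \<longrightarrow>
   d = pp t v mod T \<and> 1 \<le> pp t v \<and> pp t v \<le> Suc t \<and> (s = Beep \<longrightarrow> BD T d))"

definition PI where "PI t \<longleftrightarrow> (\<forall>u x. E u x \<longrightarrow> cfg t u \<noteq> None \<longrightarrow> cfg t x \<noteq> None \<longrightarrow>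
   pp t u \<le> pp t x + 1 \<or> (pp t u = pp t x + 2 \<and> (\<exists>c\<in>CP T. \<exists>i. cfg t u = Some (c+1, Beep, i))))"

lemma IL:
  assumes "NI t" "PI t" "ic t v" "E v w" "beeps cfg t w"
  shows "pp t v < pp t w"
proof (rule ccontr)
  assume nl: "\<not> pp t v < pp t w"
  obtain d ind where v: "cfg t v = Some (d, Listen, ind)" "(d+1) mod T \<in> CP T"
    using assms(3) unfolding indc_def by blast
  obtain dw iw where w: "cfg t w = Some (dw, Beep, iw)" using assms(5) unfolding beeps_def by blast
  have pv: "cfg t v \<noteq> None" "cfg t w \<noteq> None" using v w by auto
  have "pp t v \<le> pp t w + 1 \<or> (pp t v = pp t w + 2 \<and> (\<exists>c\<in>CP T. \<exists>i. cfg t v = Some (c+1, Beep, i)))"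
    using assms(2)[unfolded PI_def, rule_format, OF assms(4) pv] .
  then have le: "pp t v \<le> pp t w + 1" using v by auto
  define e where "e = pp t v - pp t w"
  have e: "e \<le> 1" "pp t v = pp t w + e" using le nl unfolding e_def by auto
  have dv: "d = pp t v mod T" and dw: "dw = pp t w mod T" "BD T dw"
    using assms(1) v w unfolding NI_def by blast+
  have "(d + 1) mod T = (pp t v + 1) mod T" using dv by (simp add: mod_Suc_eq)
  also have "\<dots> = (pp t w + (e + 1)) mod T" using e by simp
  also have "\<dots> = (dw + (e + 1)) mod T" by (simp only: dw(1) mod_add_left_eq)
  also have "\<dots> = (dw + e + 1) mod T" by (simp only: add.assoc)
  finally have "(d + 1) mod T = (dw + e + 1) mod T" .
  then show False using F3[OF dw(2) e(1)] v by simp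
qed

end



lemma fsB: "fs_step T (d, Beep, i) h = ((d+1) mod T, Listen, i)" by simp
lemma fsLI: "(d+1) mod T \<in> CP T \<Longrightarrow> fs_step T (d, Listen, i) True = ((d+2) mod T, Beep, True)"
  by (auto simp: step_eq)
lemma fsLH: "(d+1) mod T \<notin> CP T \<Longrightarrow> fs_step T (d, Listen, i) True = ((d+1) mod T, Listen, i)"
  by auto
lemma fsLN: "fs_step T (d, Listen, i) False = (if (i \<and> (d+1) mod T \<in> CP T) \<or> (d+1) mod T = 0
   then ((d+1) mod T, Beep, False) else ((d+1) mod T, Listen, i))"
  by (simp add: Let_def)

lemma BD1: "4 \<le> T \<Longrightarrow> BD T 1"
  unfolding BD_def using CP0[of T] by force

lemma BD_succ: "(d+1) mod T \<in> CP T \<Longrightarrow> (d+2) mod T = (d+1) mod T + 1 \<and> BD T ((d+2) mod T)"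
proof -
  assume c: "(d+1) mod T \<in> CP T"
  then have lt: "(d+1) mod T + 1 < T" by (simp add: CP_iff)
  have "(d+2) mod T = Suc (d+1) mod T" by simp
  also have "\<dots> = (d+1) mod T + 1" using lt mod_Suc[of "d+1" T] by auto
  finally show ?thesis using c unfolding BD_def by blast
qed

context fsx begin

lemma ic_iff: "cfg t v = Some (d,s,i) \<Longrightarrow> ic t v \<longleftrightarrow> (s = Listen \<and> hears E cfg t v \<and> (d+1) mod T \<in> CP T)"
  unfolding indc_def by auto

lemma NI_get: "NI t \<Longrightarrow> cfg t v = Some (d,s,i) \<Longrightarrow>
   d = pp t v mod T \<and> 1 \<le> pp t v \<and> pp t v \<le> Suc t \<and> (s = Beep \<longrightarrow> BD T d)"
  unfolding NI_def by blast

lemma NI_ph_le: "NI t \<Longrightarrow> cfg t v \<noteq> None \<Longrightarrow> pp t v \<le> Suc t"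
  using NI_get by (cases "cfg t v") auto

lemma ic_bound: assumes "NI t" "PI t" "ic t v" shows "pp t v < Suc t"
proof -
  obtain w where w: "E v w" "beeps cfg t w" using assms(3) unfolding indc_def hears_def by blast
  have "cfg t w \<noteq> None" using w(2) unfolding beeps_def by auto
  then show ?thesis using IL[OF assms w] NI_ph_le[OF assms(1)] by fastforce
qed

lemma NI_Suc: assumes "NI t" "PI t" shows "NI (Suc t)"
  unfolding NI_def
proof (intro allI impI)
  fix v d' s' i' assume new: "cfg (Suc t) v = Some (d', s', i')"
  show "d' = pp (Suc t) v mod T \<and> 1 \<le> pp (Suc t) v \<and> pp (Suc t) v \<le> Suc (Suc t) \<and> (s' = Beep \<longrightarrow> BD T d')"
  proof (cases "cfg t v")
    case None
    then have "cfg (Suc t) v = Some fs_init" using fresh[of t v] new by simp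
    then have "d' = 1" "s' = Beep" using new by (auto simp: fs_init_def)
    moreover have "pp (Suc t) v = 1" using None by simp
    ultimately show ?thesis using BD1[OF T4] T4 by simp
  next
    case (Some y)
    obtain d s i where y: "y = (d, s, i)" by (cases y) auto
    have old: "d = pp t v mod T" "1 \<le> pp t v" "pp t v \<le> Suc t" "s = Beep \<longrightarrow> BD T d"
      using NI_get[OF assms(1)] Some y by auto
    have st: "cfg (Suc t) v = Some (fs_step T (d,s,i) (hears E cfg t v))" using ex_some Some y by simp
    show ?thesis
    proof (cases "ic t v")
      case True
      then have c: "s = Listen" "hears E cfg t v" "(d+1) mod T \<in> CP T" using ic_iff Some y by auto
      have "fs_step T (d,s,i) (hears E cfg t v) = ((d+2) mod T, Beep, True)" using c fsLI by simp
      then have e: "d' = (d+2) mod T" "s' = Beep" using st new by auto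
      have p: "pp (Suc t) v = pp t v + 2" using Some True by simp
      have "pp t v < Suc t" using ic_bound[OF assms True] .
      moreover have "(d+2) mod T = (pp t v + 2) mod T" by (simp only: old(1) mod_add_left_eq)
      then have "d' = pp (Suc t) v mod T" using e p by simp
      moreover have "BD T d'" using conjunct2[OF BD_succ[OF c(3)]] unfolding e(1) .
      moreover have "1 \<le> pp (Suc t) v" using p by linarith
      ultimately show ?thesis using p by auto
    next
      case False
      have p: "pp (Suc t) v = pp t v + 1" using Some False by simp
      have dd: "d' = (d+1) mod T \<and> (s' = Beep \<longrightarrow> BD T d')"
      proof (cases s)
        case Beep then show ?thesis using st new fsB by auto
      next
        case Listen
        show ?thesis
        proof (cases "hears E cfg t v")
          case True
          then have "(d+1) mod T \<notin> CP T" using False ic_iff Some y Listen by auto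
          then show ?thesis using st new fsLH Listen True by auto
        next
          case False
          then show ?thesis using st new fsLN[of T d i] Listen CP0[OF T4] unfolding BD_def
            by (auto split: if_splits)
        qed
      qed
      have "(d+1) mod T = (pp t v + 1) mod T" by (simp only: old(1) mod_add_left_eq)
      then have "d' = pp (Suc t) v mod T" using dd p by simp
      moreover have "1 \<le> pp (Suc t) v" "pp (Suc t) v \<le> Suc (Suc t)" using p old(3) by linarith+
      ultimately show ?thesis using dd by blast
    qed
  qed
qed

lemma get3: "cfg t u \<noteq> None \<Longrightarrow> \<exists>d s i. cfg t u = Some (d,s,i)"
  by (cases "cfg t u") auto

lemma PI_Suc: assumes "NI t" "PI t" shows "PI (Suc t)"
  unfolding PI_def
proof (intro allI impI)
  fix u x assume ux: "E u x" "cfg (Suc t) u \<noteq> None" "cfg (Suc t) x \<noteq> None"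
  show "pp (Suc t) u \<le> pp (Suc t) x + 1 \<or> (pp (Suc t) u = pp (Suc t) x + 2 \<and> (\<exists>c\<in>CP T. \<exists>i. cfg (Suc t) u = Some (c+1, Beep, i)))"
  proof (cases "cfg t u = None")
    case True then have "pp (Suc t) u = 1" by simp
    then show ?thesis by simp
  next
    case uact: False
    show ?thesis
    proof (cases "cfg t x = None")
      case xnew: True
      have "t = 0 \<or> cfg (t-1) u = None"
      proof (rule ccontr)
        assume "\<not> (t = 0 \<or> cfg (t-1) u = None)"
        then have t0: "t \<noteq> 0" and "cfg (t-1) u \<noteq> None" by auto
        then have "cfg (Suc (t-1)) x \<noteq> None" using nbr_act[of "t-1" u x] ux(1) by blast
        then show False using xnew t0 by simp
      qed
      then have fu: "cfg t u = Some fs_init" "pp t u = 1" using fresh_state uact by auto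
      have "\<not> ic t u" using ic_iff[of t u 1 Beep True] fu(1) by (simp add: fs_init_def)
      then have "pp (Suc t) u = 2" using fu(1) fu(2) by simp
      moreover have "pp (Suc t) x = 1" using xnew by simp
      ultimately show ?thesis by simp
    next
      case xact: False
      obtain du su iu where u: "cfg t u = Some (du,su,iu)" using get3[OF uact] by blast
      obtain dx sx ix where x: "cfg t x = Some (dx,sx,ix)" using get3[OF xact] by blast
      have pu: "pp (Suc t) u = pp t u + (if ic t u then 2 else 1)" using u by simp
      have px: "pp (Suc t) x = pp t x + (if ic t x then 2 else 1)" using x by simp
      have nu: "du = pp t u mod T" "su = Beep \<longrightarrow> BD T du" using NI_get[OF assms(1) u] by auto
      have nx: "dx = pp t x mod T" "sx = Beep \<longrightarrow> BD T dx" using NI_get[OF assms(1) x] by auto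
      have H: "pp t u \<le> pp t x + 1 \<or> (pp t u = pp t x + 2 \<and> (\<exists>c\<in>CP T. \<exists>i. cfg t u = Some (c+1, Beep, i)))"
        using assms(2)[unfolded PI_def, rule_format, OF ux(1) uact xact] .
      then show ?thesis
      proof
        assume le: "pp t u \<le> pp t x + 1"
        show ?thesis
        proof (cases "ic t u")
          case False then show ?thesis using pu px le by auto
        next
          case icu: True
          show ?thesis
          proof (cases "pp t u \<le> pp t x \<or> ic t x")
            case True then show ?thesis using pu px le icu by auto
          next
            case False
            then have eq: "pp t u = pp t x + 1" "\<not> ic t x" using le by auto
            have c: "su = Listen" "hears E cfg t u" "(du+1) mod T \<in> CP T" using ic_iff[OF u] icu by auto
            have "cfg (Suc t) u = Some ((du+2) mod T, Beep, True)" using ex_some[OF u] c fsLI by simp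
            moreover have "(du+2) mod T = (du+1) mod T + 1" using conjunct1[OF BD_succ[OF c(3)]] .
            ultimately have "\<exists>c\<in>CP T. \<exists>i. cfg (Suc t) u = Some (c+1, Beep, i)" using c(3) by auto
            then show ?thesis using pu px eq icu by auto
          qed
        qed
      next
        assume tr: "pp t u = pp t x + 2 \<and> (\<exists>c\<in>CP T. \<exists>i. cfg t u = Some (c+1, Beep, i))"
        then obtain c i where c: "c \<in> CP T" "cfg t u = Some (c+1, Beep, i)" by blast
        have su: "su = Beep" "du = c+1" using c u by auto
        then have nic: "\<not> ic t u" using ic_iff[OF u] by auto
        have cu: "pp t u mod T = c + 1" using nu su by simp
        have "pp t u = Suc (pp t x + 1)" using tr by simp
        then have "(pp t x + 1 + 1) mod T = c + 1" using cu by simp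
        moreover have "c + 1 < T" using c(1) by (simp add: CP_iff)
        ultimately have m: "(pp t x + 1) mod T = c" using modpred by blast
        have "(dx + 1) mod T = (pp t x + 1) mod T" by (simp only: nx(1) mod_add_left_eq)
        then have dxc: "(dx+1) mod T \<in> CP T" using m c(1) by simp
        have "sx \<noteq> Beep" using F4[OF dxc] nx(2) by auto
        then have sxl: "sx = Listen" by (cases sx) auto
        have "beeps cfg t u" using u su unfolding beeps_def by auto
        then have "hears E cfg t x" unfolding hears_def using symE[OF ux(1)] by blast
        then have "ic t x" using ic_iff[OF x] sxl dxc by auto
        then show ?thesis using pu px nic tr by auto
      qed
    qed
  qed
qed

lemma NI0: "NI 0"
  unfolding NI_def
proof (intro allI impI)
  fix v d s i assume h: "cfg 0 v = Some (d,s,i)"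
  then have "cfg 0 v = Some fs_init" using ex0[of v] by auto
  then have "d = 1" "s = Beep" using h by (auto simp: fs_init_def)
  then show "d = pp 0 v mod T \<and> 1 \<le> pp 0 v \<and> pp 0 v \<le> Suc 0 \<and> (s = Beep \<longrightarrow> BD T d)"
    using BD1[OF T4] T4 by simp
qed

lemma PI0: "PI 0" unfolding PI_def by simp

lemma Inv: "NI t \<and> PI t"
  by (induction t) (use NI0 PI0 NI_Suc PI_Suc in auto)

lemma NIt: "NI t" using Inv by blast
lemma PIt: "PI t" using Inv by blast

end



definition W :: "nat \<Rightarrow> nat \<Rightarrow> nat" where
  "W T k = (k div (T div 4)) * T + 4 * (k mod (T div 4))"

lemma W_cp: assumes "4 \<le> T" shows "W T k mod T \<in> CP T"
proof -
  define m where "m = T div 4"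
  have m0: "0 < m" "4 * m \<le> T" using assms unfolding m_def by auto
  have "k mod m < m" using m0 by simp
  then have lt: "4 * (k mod m) + 3 < T" using m0 by linarith
  have "W T k mod T = (4 * (k mod m)) mod T" unfolding W_def m_def[symmetric] by simp
  also have "\<dots> = 4 * (k mod m)" using lt by simp
  finally show ?thesis using lt by (simp add: CP_iff)
qed

lemma W_step: assumes "4 \<le> T" shows "W T k + 4 \<le> W T (Suc k)"
proof -
  define m where "m = T div 4"
  have m0: "0 < m" "4 * m \<le> T" using assms unfolding m_def by auto
  show ?thesis
  proof (cases "Suc k mod m = 0")
    case True
    then have d: "Suc k div m = Suc (k div m)" using div_Suc[of k m] by simp
    have "Suc (k mod m) = m" using True mod_Suc[of k m] m0 by (auto split: if_splits)
    then have "4 * (k mod m) + 4 \<le> T" using m0 by linarith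
    then show ?thesis unfolding W_def m_def[symmetric] using d True by simp
  next
    case False
    then have d: "Suc k div m = k div m" using div_Suc[of k m] by simp
    have "Suc k mod m = Suc (k mod m)" using False mod_Suc[of k m] by (auto split: if_splits)
    then show ?thesis unfolding W_def m_def[symmetric] using d by simp
  qed
qed

lemma W_mono: assumes "4 \<le> T" "k \<le> k'" shows "W T k \<le> W T k'"
  using assms(2)
proof (induction k' rule: dec_induct)
  case base then show ?case by simp
next
  case (step n)
  have "W T n + 4 \<le> W T (Suc n)" by (rule W_step[OF assms(1)])
  then show ?case using step.IH by linarith
qed

lemma W_R: assumes "4 \<le> T" shows "W T D = 4 * D + (D div (T div 4)) * (T mod 4)"
proof -
  define m where "m = T div 4"
  have T: "T = 4 * m + T mod 4" unfolding m_def by simp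
  have Dm: "D = (D div m) * m + D mod m" by simp
  have "W T D = (D div m) * T + 4 * (D mod m)" unfolding W_def m_def ..
  also have "\<dots> = (D div m) * (4 * m) + (D div m) * (T mod 4) + 4 * (D mod m)"
    by (subst T) (simp add: algebra_simps)
  also have "\<dots> = 4 * ((D div m) * m + D mod m) + (D div m) * (T mod 4)"
    by algebra
  also have "\<dots> = 4 * D + (D div m) * (T mod 4)" by (simp only: div_mult_mod_eq)
  finally show ?thesis unfolding m_def .
qed

lemma mod4_2: "(a::nat) mod 4 = 0 \<Longrightarrow> (a + 2) mod 4 \<noteq> 0" by presburger

lemma cp_plus2: "r mod T \<in> CP T \<Longrightarrow> (r + 2) mod T \<notin> CP T"
proof -
  assume c: "r mod T \<in> CP T"
  then have lt: "r mod T + 2 < T" by (simp add: CP_iff)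
  have "(r + 2) mod T = (r mod T + 2) mod T" by (simp only: mod_add_left_eq)
  also have "\<dots> = r mod T + 2" using lt by simp
  finally have eq: "(r + 2) mod T = r mod T + 2" .
  have "r mod T mod 4 = 0" using c by (simp add: CP_iff)
  then have "(r mod T + 2) mod 4 \<noteq> 0" by (rule mod4_2)
  then show ?thesis unfolding CP_iff eq by simp
qed

context fsx begin

definition good where
  "good r u \<longleftrightarrow> cfg r u = Some ((r+1) mod T, Beep, True) \<and> pp r u = Suc r \<and> r mod T \<in> CP T"

lemma stayZ: assumes "cfg t v \<noteq> None" "pp t v = Suc t"
  shows "\<not> ic t v \<and> cfg (Suc t) v \<noteq> None \<and> pp (Suc t) v = Suc (Suc t)"
proof -
  have n: "\<not> ic t v" using ic_bound[OF NIt PIt] assms(2) by fastforce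
  obtain y where y: "cfg t v = Some y" using assms(1) by auto
  have "pp (Suc t) v = pp t v + 1" using y n by simp
  then show ?thesis using n assms act_Suc by simp
qed

lemma stay: assumes "cfg r v \<noteq> None" "pp r v = Suc r" "r \<le> t"
  shows "cfg t v \<noteq> None \<and> pp t v = Suc t"
  using assms(3)
proof (induction t rule: dec_induct)
  case base then show ?case using assms by simp
next
  case (step n) then show ?case using stayZ[of n v] by simp
qed

lemma good0: "cfg 0 x \<noteq> None \<Longrightarrow> good 0 x"
proof -
  assume "cfg 0 x \<noteq> None"
  then have "cfg 0 x = Some fs_init" using ex0[of x] by auto
  then show ?thesis unfolding good_def fs_init_def using T4 CP0[OF T4] by simp
qed

lemma goodB: "cfg t x \<noteq> None \<Longrightarrow> pp t x = Suc t \<Longrightarrow> \<exists>r\<le>t. good r x"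
proof (induction t)
  case 0 then show ?case using good0 by auto
next
  case (Suc t)
  show ?case
  proof (cases "cfg t x = None")
    case True then have "pp (Suc t) x = 1" by simp
    then show ?thesis using Suc.prems by simp
  next
    case False
    obtain d s i where y: "cfg t x = Some (d,s,i)" using get3[OF False] by blast
    have nd: "d = pp t x mod T" "pp t x \<le> Suc t" using NI_get[OF NIt y] by auto
    show ?thesis
    proof (cases "ic t x")
      case True
      have c: "s = Listen" "hears E cfg t x" "(d+1) mod T \<in> CP T" using ic_iff[OF y] True by auto
      have st: "cfg (Suc t) x = Some ((d+2) mod T, Beep, True)" using ex_some[OF y] c fsLI by simp
      have "pp (Suc t) x = pp t x + 2" using y True by simp
      then have pt: "pp t x = t" using Suc.prems(2) by simp
      have "(d+2) mod T = (t + 2) mod T" by (simp only: nd(1) pt mod_add_left_eq)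
      moreover have "(d+1) mod T = (t + 1) mod T" by (simp only: nd(1) pt mod_add_left_eq)
      ultimately have "good (Suc t) x" unfolding good_def using st c(3) Suc.prems(2) by simp
      then show ?thesis by blast
    next
      case False
      have "pp (Suc t) x = pp t x + 1" using y False by simp
      then have "pp t x = Suc t" using Suc.prems(2) by simp
      then obtain r where "r \<le> t" "good r x" using Suc.IH y by auto
      then show ?thesis by (intro exI[of _ r]) auto
    qed
  qed
qed

definition nxt where "nxt r = (LEAST n. r < n \<and> (n+1) mod T \<in> CP T)"

lemma nxt_ex: "r < (r+1)*T - 1 \<and> ((r+1)*T - 1 + 1) mod T \<in> CP T"
proof -
  define X where "X = (r+1)*T"
  have "4*(r+1) \<le> T*(r+1)" using mult_le_mono1[OF T4] by blast
  then have "X \<ge> 4*(r+1)" unfolding X_def by (simp add: mult.commute)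
  then have a: "r < X - 1" by arith
  have "X \<ge> 1" using \<open>X \<ge> 4*(r+1)\<close> by simp
  then have "X - 1 + 1 = X" by simp
  then have "(X - 1 + 1) mod T = 0" unfolding X_def by simp
  then show ?thesis using a CP0[OF T4] unfolding X_def by simp
qed
lemma nxt1: "r < nxt r \<and> (nxt r + 1) mod T \<in> CP T"
  unfolding nxt_def by (rule LeastI_ex) (use nxt_ex in blast)

lemma nxt2: assumes "r < s" "s < nxt r" shows "(s + 1) mod T \<notin> CP T"
proof
  assume "(s+1) mod T \<in> CP T"
  then have "r < s \<and> (s+1) mod T \<in> CP T" using assms(1) by simp
  moreover have "\<not> (r < s \<and> (s+1) mod T \<in> CP T)" using not_less_Least[OF assms(2)[unfolded nxt_def]] .
  ultimately show False by simp
qed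

lemma nxt3: "r < s \<Longrightarrow> (s + 1) mod T \<in> CP T \<Longrightarrow> nxt r \<le> s"
  unfolding nxt_def by (rule Least_le) blast

lemma chain: assumes g: "good r u"
  shows "r < s \<Longrightarrow> s \<le> nxt r \<Longrightarrow> (s < nxt r \<longrightarrow> cfg s u = Some ((s+1) mod T, Listen, True)) \<and> (s = nxt r \<longrightarrow> beeps cfg s u)"
proof (induction s)
  case 0 then show ?case by simp
next
  case (Suc s)
  have gr: "cfg r u = Some ((r+1) mod T, Beep, True)" "pp r u = Suc r" "r mod T \<in> CP T"
    using g unfolding good_def by auto
  have n1: "r < nxt r" "(nxt r + 1) mod T \<in> CP T" using nxt1 by auto
  show ?case
  proof (cases "s = r")
    case True
    have "cfg (Suc r) u = Some (((r+1) mod T + 1) mod T, Listen, True)" using ex_some[OF gr(1)] fsB by simp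
    moreover have "((r+1) mod T + 1) mod T = (Suc r + 1) mod T" by (simp only: mod_add_left_eq Suc_eq_plus1)
    moreover have "(Suc r + 1) mod T \<notin> CP T" using cp_plus2[OF gr(3)] by simp
    ultimately show ?thesis using True n1 by auto
  next
    case False
    then have rs: "r < s" "s < nxt r" using Suc.prems by auto
    have cs: "cfg s u = Some ((s+1) mod T, Listen, True)" using Suc.IH rs by auto
    have ps: "pp s u = Suc s" using stay[of r u s] gr rs by auto
    have nic: "\<not> ic s u" using stayZ[of s u] cs ps by auto
    have e: "((s+1) mod T + 1) mod T = (Suc s + 1) mod T" by (simp only: mod_add_left_eq Suc_eq_plus1)
    show ?thesis
    proof (cases "hears E cfg s u")
      case True
      then have nc: "((s+1) mod T + 1) mod T \<notin> CP T" using nic ic_iff[OF cs] by auto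
      then have "cfg (Suc s) u = Some (((s+1) mod T + 1) mod T, Listen, True)"
        using ex_some[OF cs] fsLH True by simp
      moreover have "Suc s \<noteq> nxt r" using nc e n1(2) by auto
      ultimately show ?thesis using e by auto
    next
      case False
      have st: "cfg (Suc s) u = Some (fs_step T ((s+1) mod T, Listen, True) False)" using ex_some[OF cs] False by simp
      show ?thesis
      proof (cases "Suc s = nxt r")
        case True
        then have "((s+1) mod T + 1) mod T \<in> CP T" using e n1(2) by simp
        then have "cfg (Suc s) u = Some (((s+1) mod T + 1) mod T, Beep, False)" using st fsLN by simp
        then show ?thesis unfolding beeps_def using True by auto
      next
        case False
        then have "Suc s < nxt r" using Suc.prems by simp
        then have "(Suc s + 1) mod T \<notin> CP T" using nxt2[of r "Suc s"] rs by simp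
        then have nc1: "((s+1) mod T + 1) mod T \<notin> CP T" unfolding e .
        have nc2: "((s+1) mod T + 1) mod T \<noteq> 0"
        proof
          assume "((s+1) mod T + 1) mod T = 0"
          then show False using nc1 CP0[OF T4] by simp
        qed
        note nc = nc1 nc2
        then have "cfg (Suc s) u = Some (((s+1) mod T + 1) mod T, Listen, True)" using st fsLN by simp
        then show ?thesis using e False by auto
      qed
    qed
  qed
qed

lemma waveA: assumes g: "good r u" and ux: "E u x" shows "\<exists>r'\<le>Suc (nxt r). good r' x"
proof -
  define n where "n = nxt r"
  have gr: "cfg r u \<noteq> None" "pp r u = Suc r" using g unfolding good_def by auto
  have n1: "r < n" "(n + 1) mod T \<in> CP T" using nxt1 unfolding n_def by auto
  have bu: "beeps cfg n u" using chain[OF g, of n] n1 unfolding n_def by simp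
  have pu: "pp n u = Suc n" "cfg n u \<noteq> None" using stay[OF gr, of n] n1 by auto
  have xa: "cfg n x \<noteq> None"
    using act_mono[OF nbr_act[OF gr(1) ux], of n] n1 by simp
  obtain du iu where cu: "cfg n u = Some (du, Beep, iu)" using bu unfolding beeps_def by blast
  have du: "du = (n+1) mod T" using NI_get[OF NIt cu] pu by simp
  have "pp n u \<le> pp n x + 1 \<or> (pp n u = pp n x + 2 \<and> (\<exists>c\<in>CP T. \<exists>i. cfg n u = Some (c+1, Beep, i)))"
    using PIt[unfolded PI_def, rule_format, OF ux pu(2) xa] .
  moreover have "\<not> (\<exists>c\<in>CP T. \<exists>i. cfg n u = Some (c+1, Beep, i))"
    using cu du n1(2) F6 by auto
  ultimately have lo: "n \<le> pp n x" using pu by auto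
  have hi: "pp n x \<le> Suc n" using NI_ph_le[OF NIt xa] .
  have ppx: "pp (Suc n) x = Suc (Suc n)"
  proof (cases "pp n x = Suc n")
    case True then show ?thesis using stayZ[of n x] xa by simp
  next
    case False
    then have pn: "pp n x = n" using lo hi by simp
    obtain dx sx ix where cx: "cfg n x = Some (dx, sx, ix)" using get3[OF xa] by blast
    have dx: "dx = n mod T" "sx = Beep \<longrightarrow> BD T dx" using NI_get[OF NIt cx] pn by auto
    have "(dx + 1) mod T = (n + 1) mod T" by (simp only: dx(1) mod_add_left_eq)
    then have dxc: "(dx + 1) mod T \<in> CP T" using n1(2) by simp
    have "sx \<noteq> Beep" using F4[OF dxc] dx(2) by auto
    then have "sx = Listen" by (cases sx) auto
    moreover have "hears E cfg n x" unfolding hears_def using symE[OF ux] bu by blast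
    ultimately have "ic n x" using ic_iff[OF cx] dxc by auto
    then show ?thesis using cx pn by simp
  qed
  have "\<exists>r'\<le>Suc n. good r' x" using goodB[OF act_Suc[OF xa] ppx] .
  then show ?thesis unfolding n_def .
qed

lemma wave: assumes "cfg 0 s0 \<noteq> None" shows "(E ^^ k) s0 v \<Longrightarrow> \<exists>r\<le>W T k. good r v"
proof (induction k arbitrary: v)
  case 0
  then have "v = s0" by simp
  then show ?case using good0 assms by auto
next
  case (Suc k)
  obtain u where u: "(E ^^ k) s0 u" "E u v" using Suc.prems by auto
  obtain r where r: "r \<le> W T k" "good r u" using Suc.IH[OF u(1)] by blast
  obtain r' where r': "r' \<le> Suc (nxt r)" "good r' v" using waveA[OF r(2) u(2)] by blast
  have "W T k + 4 \<le> W T (Suc k)" using W_step[OF T4] .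
  then have "r < W T (Suc k) - 1" "(W T (Suc k) - 1 + 1) mod T \<in> CP T"
    using r(1) W_cp[OF T4, of "Suc k"] by auto
  then have "nxt r \<le> W T (Suc k) - 1" by (rule nxt3)
  then have "r' \<le> W T (Suc k)" using r'(1) \<open>W T k + 4 \<le> W T (Suc k)\<close> by linarith
  then show ?case using r'(2) by blast
qed

end



context fsx begin

lemma indF1: assumes H: "\<forall>t\<ge>R. \<forall>v. cfg t v \<noteq> None \<and> pp t v = Suc t"
  and s: "R \<le> s" "(s+2) mod T = 0"
  shows "\<exists>d st. cfg (Suc s) v = Some (d, st, False)"
proof -
  have a: "cfg s v \<noteq> None" "pp s v = Suc s" using H s(1) by auto
  obtain d st i where c: "cfg s v = Some (d, st, i)" using get3[OF a(1)] by blast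
  have nic: "\<not> ic s v" using stayZ[OF a] by simp
  have nd: "d = pp s v mod T" "st = Beep \<longrightarrow> BD T d" using NI_get[OF NIt c] by auto
  have "(d + 1) mod T = (s + 2) mod T" by (simp only: nd(1) a(2) mod_add_left_eq Suc_eq_plus1 add.assoc one_add_one)
  then have d0: "(d + 1) mod T = 0" using s(2) by simp
  then have dc: "(d + 1) mod T \<in> CP T" using CP0[OF T4] by simp
  have "st \<noteq> Beep" using F4[OF dc] nd(2) by auto
  then have stl: "st = Listen" by (cases st) auto
  have nh: "\<not> hears E cfg s v" using nic ic_iff[OF c] stl dc by auto
  have "cfg (Suc s) v = Some (fs_step T (d, Listen, i) False)" using ex_some[OF c] stl nh by simp
  also have "\<dots> = Some (0, Beep, False)" using fsLN[of T d i] d0 by simp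
  finally show ?thesis by blast
qed

lemma indF2: assumes H: "\<forall>t\<ge>R. \<forall>v. cfg t v \<noteq> None \<and> pp t v = Suc t"
  and t: "R \<le> t" and c: "cfg t v = Some (d, st, False)"
  shows "(\<exists>d' st'. cfg (Suc t) v = Some (d', st', False)) \<and> (beeps cfg (Suc t) v \<longleftrightarrow> delta cfg (Suc t) v = 0)"
proof -
  have a: "cfg t v \<noteq> None" "pp t v = Suc t" using H t by auto
  have nic: "\<not> ic t v" using stayZ[OF a] by simp
  have nd: "st = Beep \<longrightarrow> BD T d" using NI_get[OF NIt c] by auto
  show ?thesis
  proof (cases st)
    case Beep
    then have "cfg (Suc t) v = Some ((d+1) mod T, Listen, False)" using ex_some[OF c] fsB by simp
    moreover have "(d+1) mod T \<noteq> 0" using F5[OF T4] nd Beep by simp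
    ultimately show ?thesis unfolding beeps_def delta_def by simp
  next
    case Listen
    show ?thesis
    proof (cases "hears E cfg t v")
      case True
      then have nc: "(d+1) mod T \<notin> CP T" using nic ic_iff[OF c] Listen by auto
      then have "cfg (Suc t) v = Some ((d+1) mod T, Listen, False)" using ex_some[OF c] fsLH Listen True by simp
      moreover have "(d+1) mod T \<noteq> 0" using nc CP0[OF T4] by (cases "(d+1) mod T = 0") auto
      ultimately show ?thesis unfolding beeps_def delta_def by simp
    next
      case False
      have "cfg (Suc t) v = Some (fs_step T (d, Listen, False) False)" using ex_some[OF c] Listen False by simp
      then have "cfg (Suc t) v = Some (if (d+1) mod T = 0 then ((d+1) mod T, Beep, False) else ((d+1) mod T, Listen, False))"
        using fsLN[of T d False] by simp
      then show ?thesis unfolding beeps_def delta_def by (cases "(d+1) mod T = 0") auto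
    qed
  qed
qed

lemma final2: assumes H: "\<forall>t\<ge>R. \<forall>v. cfg t v \<noteq> None \<and> pp t v = Suc t"
  shows "\<exists>t1. \<forall>t\<ge>t1. \<forall>v. beeps cfg t v \<longleftrightarrow> delta cfg t v = 0"
proof -
  define X where "X = (R+2)*T"
  define s where "s = X - 2"
  have "4*(R+2) \<le> T*(R+2)" using mult_le_mono1[OF T4] by blast
  then have X: "X \<ge> 4*(R+2)" unfolding X_def by (simp add: mult.commute)
  then have s1: "R \<le> s" unfolding s_def by arith
  have "s + 2 = X" unfolding s_def using X by arith
  then have s2: "(s+2) mod T = 0" unfolding X_def by simp
  have F: "\<forall>v. \<exists>d st. cfg t v = Some (d, st, False)" if "Suc s \<le> t" for t
    using that
  proof (induction t rule: dec_induct)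
    case base then show ?case using indF1[OF H s1 s2] by blast
  next
    case (step n)
    show ?case
    proof
      fix v
      obtain d st where "cfg n v = Some (d, st, False)" using step.IH by blast
      then show "\<exists>d st. cfg (Suc n) v = Some (d, st, False)" using indF2[OF H _ ] step.hyps s1 by auto
    qed
  qed
  have "\<forall>t\<ge>Suc (Suc s). \<forall>v. beeps cfg t v \<longleftrightarrow> delta cfg t v = 0"
  proof (intro allI impI)
    fix t v assume "Suc (Suc s) \<le> t"
    then obtain n where n: "t = Suc n" "Suc s \<le> n" by (cases t) auto
    obtain d st where "cfg n v = Some (d, st, False)" using F[OF n(2)] by blast
    then show "beeps cfg t v \<longleftrightarrow> delta cfg t v = 0" using indF2[OF H _ ] n s1 by auto
  qed
  then show ?thesis by blast
qed

end



theorem theorem1: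
  fixes E :: "'v::finite \<Rightarrow> 'v \<Rightarrow> bool"
    and T :: nat
    and cfg :: "nat \<Rightarrow> 'v \<Rightarrow> nstate option"
  assumes "undirected_graph E"
    and "connected_graph E"
    and "T \<ge> 4"
    and "fs_execution T E cfg"
  shows "(let D = diameter E;
              R = 4 * D + (D div (T div 4)) * (T mod 4)
          in (\<forall>t\<ge>R. (\<forall>v. cfg t v \<noteq> None) \<and> (\<forall>v w. delta cfg t v = delta cfg t w))
             \<and> (\<exists>t1. \<forall>t\<ge>t1. \<forall>v. beeps cfg t v \<longleftrightarrow> delta cfg t v = 0)
             \<and> R \<le> 7 * D)"
proof -
  interpret fsx E T cfg by unfold_locales (use assms in auto)
  define D where "D = diameter E"
  define R where "R = 4 * D + (D div (T div 4)) * (T mod 4)"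
  have RW: "R = W T D" unfolding R_def using W_R[OF T4] by simp
  obtain s0 where s0: "cfg 0 s0 \<noteq> None" using assms(4) unfolding fs_execution_def by blast
  have fin: "finite {gdist E u v | u v. True}"
  proof -
    have "{gdist E u v | u v. True} = (\<lambda>(u,v). gdist E u v) ` UNIV" by auto
    then show ?thesis by simp
  qed
  have allgood: "\<exists>r\<le>R. good r v" for v
  proof -
    have "E\<^sup>*\<^sup>* s0 v" using assms(2) unfolding connected_graph_def by blast
    then have "\<exists>n. (E ^^ n) s0 v" using rtranclp_power by metis
    then have k: "(E ^^ gdist E s0 v) s0 v" unfolding gdist_def by (rule LeastI_ex)
    have "gdist E s0 v \<le> D" unfolding D_def diameter_def using fin by (intro Max_ge) auto
    then have "W T (gdist E s0 v) \<le> W T D" using W_mono[OF T4] by blast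
    moreover obtain r where "r \<le> W T (gdist E s0 v)" "good r v" using wave[OF s0 k] by blast
    ultimately have "r \<le> R" "good r v" using RW by auto
    then show ?thesis by blast
  qed
  have H: "\<forall>t\<ge>R. \<forall>v. cfg t v \<noteq> None \<and> pp t v = Suc t"
  proof (intro allI impI)
    fix t v assume t: "R \<le> t"
    obtain r where r: "r \<le> R" "good r v" using allgood by blast
    have "cfg r v \<noteq> None" "pp r v = Suc r" using r(2) unfolding good_def by auto
    then show "cfg t v \<noteq> None \<and> pp t v = Suc t" using stay[of r v t] r(1) t by simp
  qed
  have P1: "\<forall>t\<ge>R. (\<forall>v. cfg t v \<noteq> None) \<and> (\<forall>v w. delta cfg t v = delta cfg t w)"
  proof (intro allI impI)
    fix t assume t: "R \<le> t"
    have A: "\<forall>v. cfg t v \<noteq> None" using H t by simp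
    have dv: "delta cfg t v = Suc t mod T" for v
    proof -
      have a: "cfg t v \<noteq> None" "pp t v = Suc t" using H t by auto
      obtain d s i where c: "cfg t v = Some (d,s,i)" using get3[OF a(1)] by blast
      show ?thesis using NI_get[OF NIt c] a(2) c unfolding delta_def by simp
    qed
    show "(\<forall>v. cfg t v \<noteq> None) \<and> (\<forall>v w. delta cfg t v = delta cfg t w)" using A dv by simp
  qed
  have P2: "\<exists>t1. \<forall>t\<ge>t1. \<forall>v. beeps cfg t v \<longleftrightarrow> delta cfg t v = 0" using final2[OF H] .
  have P3: "R \<le> 7 * D"
  proof -
    have "T mod 4 \<le> 3" by simp
    then have "(D div (T div 4)) * (T mod 4) \<le> (D div (T div 4)) * 3" by (rule mult_le_mono2)
    moreover have "D div (T div 4) \<le> D" by (rule div_le_dividend)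
    ultimately show ?thesis unfolding R_def by linarith
  qed
  show ?thesis unfolding Let_def D_def[symmetric] R_def[symmetric] using P1 P2 P3 by blast
qed



end
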